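(* Let $d\ge2$, $n\ge1$, $d\le t\le dn$, let $\gamma$ be a positive conductivity on the lattice graph below, fix $p\in L_t$, and let $M_p=\mathcal N(p)\cap(J_{t-1}^{\mathcal S}\cup L_{t-1}^{\mathcal S})$. Suppose $\mathbf u\in\mathbb R^{L_t^{\mathcal S}\cup J_{t-1}^{\mathcal S}}$ satisfies $\mathbf u_p=0$, $\sum_{q\in\mathcal N(r)}\gamma_{rq}(\mathbf u_q-\mathbf u_r)=0$ for all $r\in L_{t-1}^{\mathcal S}\setminus M_p$, $\mathbf u=0$ on $J_{t-1}^{\mathcal S}$, and $\gamma_{bq_b}(\mathbf u_{q_b}-\mathbf u_b)=0$ for all $b\in J_{t-1}^{\mathcal S}$. Then $\mathbf u=0$.
   Context: Lattice: $D=\{x\in\mathbb Z^d:1\le x_i\le n\ \forall i\}$, $\partial D=\{p\in\mathbb Z^d:\min_{q\in D}\|q-p\|_{\ell^1}=1\}$; $E$ = unordered pairs $pq\subseteq D\cup\partial D$ with $\|p-q\|_{\ell^1}=1$, not both in $\partial D$; $\mathcal N(p)=\{q:pq\in E\}$; each $b\in\partial D$ has a unique neighbour $q_b\in D$. Conductivity $\gamma:E\to(0,\infty)$, symmetric. With $s(x)=\sum_ix_i$: $L_t=\{x\in D:s(x)=t\}$, $L_t^{\mathcal S}=\{x\in D:s(x)\le t\}$, $K_t^+=\{x\in\partial D:s(x)=t,\max_ix_i=n+1\}$, $K_t^-=\{x\in\partial D:s(x)=t,\min_ix_i=0\}$, $K_t^{\mathcal S\pm}=\bigcup_{\ell\le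 t}K_\ell^\pm$, $J_t^{\mathcal S}=K_t^{\mathcal S-}\cup K_{t+1}^{\mathcal S+}$. *)

theory Defs
  imports Complex_Main
begin

text \<open>Lattice points of Z^d are functions 'd \<Rightarrow> int over a finite index type 'd, d = CARD('d).\<close>

definition l1 :: "('d::finite \<Rightarrow> int) \<Rightarrow> ('d \<Rightarrow> int) \<Rightarrow> int" where
  "l1 p q = (\<Sum>i\<in>UNIV. \<bar>p i - q i\<bar>)"

definition ssum :: "('d::finite \<Rightarrow> int) \<Rightarrow> int" where
  "ssum x = (\<Sum>i\<in>UNIV. x i)"

definition Dom :: "nat \<Rightarrow> ('d::finite \<Rightarrow> int) set" where
  "Dom n = {x. \<forall>i. 1 \<le> x i \<and> x i \<le> int n}"

definition bdry :: "nat \<Rightarrow> ('d::finite \<Rightarrow> int) set" where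
  "bdry n = {p. Min ((\<lambda>q. l1 q p) ` Dom n) = 1}"

definition edge :: "nat \<Rightarrow> ('d::finite \<Rightarrow> int) \<Rightarrow> ('d \<Rightarrow> int) \<Rightarrow> bool" where
  "edge n p q \<longleftrightarrow> p \<in> Dom n \<union> bdry n \<and> q \<in> Dom n \<union> bdry n \<and> l1 p q = 1
      \<and> \<not> (p \<in> bdry n \<and> q \<in> bdry n)"

definition nbhd :: "nat \<Rightarrow> ('d::finite \<Rightarrow> int) \<Rightarrow> ('d \<Rightarrow> int) set" where
  "nbhd n p = {q. edge n p q}"

definition qb :: "nat \<Rightarrow> ('d::finite \<Rightarrow> int) \<Rightarrow> ('d \<Rightarrow> int)" where
  "qb n b = (THE q. q \<in> Dom n \<and> edge n b q)"

definition Lt :: "nat \<Rightarrow> int \<Rightarrow> ('d::finite \<Rightarrow> int) set" where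
  "Lt n t = {x \<in> Dom n. ssum x = t}"

definition LS :: "nat \<Rightarrow> int \<Rightarrow> ('d::finite \<Rightarrow> int) set" where
  "LS n t = {x \<in> Dom n. ssum x \<le> t}"

definition Kplus :: "nat \<Rightarrow> int \<Rightarrow> ('d::finite \<Rightarrow> int) set" where
  "Kplus n t = {x \<in> bdry n. ssum x = t \<and> Max (range x) = int n + 1}"

definition Kminus :: "nat \<Rightarrow> int \<Rightarrow> ('d::finite \<Rightarrow> int) set" where
  "Kminus n t = {x \<in> bdry n. ssum x = t \<and> Min (range x) = 0}"

definition KSplus :: "nat \<Rightarrow> int \<Rightarrow> ('d::finite \<Rightarrow> int) set" where
  "KSplus n t = (\<Union>l\<in>{..t}. Kplus n l)"

definition KSminus :: "nat \<Rightarrow> int \<Rightarrow> ('d::finite \<Rightarrow> int) set" where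
  "KSminus n t = (\<Union>l\<in>{..t}. Kminus n l)"

definition JS :: "nat \<Rightarrow> int \<Rightarrow> ('d::finite \<Rightarrow> int) set" where
  "JS n t = KSminus n t \<union> KSplus n (t + 1)"

definition conductivity :: "nat \<Rightarrow> (('d::finite \<Rightarrow> int) \<Rightarrow> ('d \<Rightarrow> int) \<Rightarrow> real) \<Rightarrow> bool" where
  "conductivity n \<gamma> \<longleftrightarrow> (\<forall>p q. edge n p q \<longrightarrow> \<gamma> p q > 0 \<and> \<gamma> p q = \<gamma> q p)"

end

theory Submission
  imports Defs "HOL-Library.FuncSet"
begin

lemma l1_sym: "l1 p q = l1 q p"
  unfolding l1_def by (simp add: abs_minus_commute)

lemma l1_nonneg: "0 \<le> l1 p q"
  unfolding l1_def by (simp add: sum_nonneg)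

lemma l1_zero: "l1 p q = 0 \<Longrightarrow> p = q"
  unfolding l1_def by (subst (asm) sum_nonneg_eq_0_iff) (auto intro!: ext)

lemma l1_self: "l1 p p = 0"
  unfolding l1_def by simp

lemma l1_upd: "l1 r (r(i := r i + c)) = \<bar>c\<bar>"
proof -
  have eq: "(\<lambda>k. \<bar>r k - (r(i:= r i + c)) k\<bar>) = (\<lambda>k. if k = i then \<bar>c\<bar> else 0)" by auto
  show ?thesis unfolding l1_def eq by simp
qed

lemma ssum_upd: "ssum (r(i := v)) = ssum r - r i + v"
proof -
  have "(r(i:=v)) = (\<lambda>k. r k + (if k = i then v - r i else 0))" by auto
  then have "ssum (r(i:=v)) = (\<Sum>k\<in>UNIV. r k + (if k = i then v - r i else 0))"
    unfolding ssum_def by simp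
  also have "\<dots> = ssum r + (v - r i)" unfolding ssum_def by (simp add: sum.distrib)
  finally show ?thesis by simp
qed

lemma l1_one:
  assumes "l1 r q = 1"
  shows "\<exists>i. q = r(i := r i + 1) \<or> q = r(i := r i - 1)"
proof -
  have "r \<noteq> q" by (metis assms l1_self zero_neq_one)
  then obtain i where i: "r i \<noteq> q i" by auto
  have split: "l1 r q = \<bar>r i - q i\<bar> + (\<Sum>k\<in>UNIV-{i}. \<bar>r k - q k\<bar>)"
    unfolding l1_def by (simp add: sum.remove)
  have nn: "0 \<le> (\<Sum>k\<in>UNIV-{i}. \<bar>r k - q k\<bar>)" by (simp add: sum_nonneg)
  have "\<bar>r i - q i\<bar> \<ge> 1" using i by auto
  then have a: "\<bar>r i - q i\<bar> = 1" and b: "(\<Sum>k\<in>UNIV-{i}. \<bar>r k - q k\<bar>) = 0"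
    using split assms nn by linarith+
  from b have "\<forall>k\<in>UNIV-{i}. \<bar>r k - q k\<bar> = 0"
    by (subst (asm) sum_nonneg_eq_0_iff) auto
  then have oth: "\<And>k. k \<noteq> i \<Longrightarrow> q k = r k" by auto
  have "q = r(i := q i)" using oth by (auto intro!: ext)
  moreover have "q i = r i + 1 \<or> q i = r i - 1" using a by linarith
  ultimately show ?thesis by auto
qed

lemma finite_box: "finite {q :: 'd::finite \<Rightarrow> int. \<forall>i. q i \<in> A i}" if "\<And>i. finite (A i)"
proof -
  have "{q :: 'd::finite \<Rightarrow> int. \<forall>i. q i \<in> A i} = Pi\<^sub>E UNIV A"
    by (simp add: PiE_UNIV_domain Pi_def)
  then show ?thesis using finite_PiE[of UNIV A] that by simp
qed

lemma finite_Dom: "finite (Dom n :: ('d::finite \<Rightarrow> int) set)"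
proof -
  have "Dom n \<subseteq> {q :: 'd \<Rightarrow> int. \<forall>i. q i \<in> {1..int n}}" unfolding Dom_def by auto
  then show ?thesis using finite_box[of "\<lambda>_. {1..int n}"] finite_subset by blast
qed

lemma Dom_ne: "n \<ge> 1 \<Longrightarrow> (\<lambda>_. 1) \<in> Dom n"
  unfolding Dom_def by auto

lemma bdry_iff:
  fixes b :: "'d::finite \<Rightarrow> int"
  assumes "n \<ge> 1"
  shows "b \<in> bdry n \<longleftrightarrow> b \<notin> Dom n \<and> (\<exists>q\<in>Dom n. l1 q b = 1)"
proof -
  let ?A = "(\<lambda>q. l1 q b) ` (Dom n :: ('d \<Rightarrow> int) set)"
  have fin: "finite ?A" by (rule finite_imageI[OF finite_Dom])
  have ne: "?A \<noteq> {}" using Dom_ne[OF assms] by blast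
  show ?thesis
  proof
    assume "b \<in> bdry n"
    then have m: "Min ?A = 1" unfolding bdry_def by simp
    have "Min ?A \<in> ?A" using fin ne by (rule Min_in)
    then obtain q where q: "q \<in> Dom n" "l1 q b = 1" using m by auto
    have "b \<notin> Dom n"
    proof
      assume "b \<in> Dom n"
      then have "Min ?A \<le> l1 b b" using fin by simp
      then show False using m l1_self[of b] by simp
    qed
    then show "b \<notin> Dom n \<and> (\<exists>q\<in>Dom n. l1 q b = 1)" using q by blast
  next
    assume h: "b \<notin> Dom n \<and> (\<exists>q\<in>Dom n. l1 q b = 1)"
    have "Min ?A = 1"
    proof (rule Min_eqI[OF fin])
      fix y assume "y \<in> ?A"
      then obtain q where "q \<in> Dom n" "y = l1 q b" by auto
      then have "q \<noteq> b" "y \<ge> 0" using h l1_nonneg by auto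
      moreover have "y \<noteq> 0" using \<open>q \<noteq> b\<close> \<open>y = l1 q b\<close> l1_zero by auto
      ultimately show "1 \<le> y" by simp
    next
      show "1 \<in> ?A" using h by force
    qed
    then show "b \<in> bdry n" unfolding bdry_def by simp
  qed
qed

lemma edge_Dom:
  assumes "n \<ge> 1" "r \<in> Dom n"
  shows "edge n r q \<longleftrightarrow> l1 r q = 1"
proof
  assume "edge n r q" then show "l1 r q = 1" unfolding edge_def by simp
next
  assume h: "l1 r q = 1"
  have rb: "r \<notin> bdry n" using bdry_iff[OF assms(1)] assms(2) by blast
  have "q \<in> Dom n \<union> bdry n"
    using bdry_iff[OF assms(1), of q] assms(2) h l1_sym[of r q] by blast
  then show "edge n r q" unfolding edge_def using assms(2) h rb by blast
qed


lemma Dom_sum_nonneg: "x \<in> Dom n \<Longrightarrow> 0 \<le> ssum x"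
  unfolding Dom_def ssum_def by (auto intro!: sum_nonneg simp: order_trans[OF zero_le_one])

lemma step:
  fixes u :: "('d::finite \<Rightarrow> int) \<Rightarrow> real" and x :: "'d \<Rightarrow> int"
  assumes n1: "n \<ge> 1" and cond: "conductivity n \<gamma>"
  and eq: "\<And>r. r \<in> Dom n \<Longrightarrow> ssum r \<le> t - 1 \<Longrightarrow> r \<notin> nbhd n p \<Longrightarrow>
              (\<Sum>q\<in>nbhd n r. \<gamma> r q * (u q - u r)) = 0"
  and J: "\<And>b. b \<in> JS n (t - 1) \<Longrightarrow> u b = 0"
  and xD: "x \<in> Dom n" and xt: "ssum x \<le> t" and xj: "x j \<ge> 2" and xp: "x(j := x j - 1) \<notin> nbhd n p"
  and low: "\<And>y. y \<in> Dom n \<Longrightarrow> ssum y < ssum x \<Longrightarrow> u y = 0"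
  and prev: "\<And>i. i \<noteq> j \<Longrightarrow> x(j := x j - 1, i := x i + 1) \<in> Dom n \<Longrightarrow>
              u (x(j := x j - 1, i := x i + 1)) = 0"
  shows "u x = 0"
proof -
  define r where "r = x(j := x j - 1)"
  have rD: "r \<in> Dom n" using xD xj unfolding r_def Dom_def by (auto simp: spec[of _ j], smt (verit))
  have sr: "ssum r = ssum x - 1" unfolding r_def ssum_upd by simp
  have xr: "x = r(j := r j + 1)" unfolding r_def by (auto intro!: ext)
  have ur: "u r = 0" using low rD sr by simp
  have nb: "nbhd n r = {q. l1 r q = 1}" unfolding nbhd_def using edge_Dom[OF n1 rD] by auto
  have xin: "x \<in> nbhd n r" using nb l1_upd[of r j 1] xr by simp
  have "nbhd n r \<subseteq> range (\<lambda>i. r(i:= r i+1)) \<union> range (\<lambda>i. r(i:= r i - 1))"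
    using nb l1_one by fastforce
  then have fin: "finite (nbhd n r)" by (rule finite_subset) simp
  have zero: "u q = 0" if q: "q \<in> nbhd n r" "q \<noteq> x" for q
  proof -
    have l: "l1 r q = 1" using nb q by simp
    have qDB: "q \<in> Dom n \<union> bdry n" using q unfolding nbhd_def edge_def by simp
    from l1_one[OF l] obtain i where "q = r(i := r i + 1) \<or> q = r(i := r i - 1)" by blast
    then show "u q = 0"
    proof
      assume qe: "q = r(i := r i + 1)"
      have ij: "i \<noteq> j" using qe xr q(2) by auto
      have qx: "q = x(j := x j - 1, i := x i + 1)" using qe ij unfolding r_def by (auto intro!: ext)
      show ?thesis
      proof (cases "q \<in> Dom n")
        case True then show ?thesis using prev ij qx by simp
      next
        case False
        then have qb: "q \<in> bdry n" using qDB by simp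
        have oth: "\<And>k. k \<noteq> i \<Longrightarrow> 1 \<le> q k \<and> q k \<le> int n" using rD qe unfolding Dom_def by auto
        have ri: "1 \<le> r i \<and> r i \<le> int n" using rD unfolding Dom_def by blast
        have qi1: "1 \<le> q i" "q i \<le> int n + 1" using ri qe by auto
        have qi: "q i = int n + 1"
        proof (rule ccontr)
          assume "q i \<noteq> int n + 1"
          then have "\<forall>k. 1 \<le> q k \<and> q k \<le> int n" using oth qi1
            by (metis le_less int_one_le_iff_zero_less zle_add1_eq_le)
          then have "q \<in> Dom n" unfolding Dom_def by simp
          then show False using False by simp
        qed
        have "Max (range q) = int n + 1"
        proof (rule Max_eqI)
          show "finite (range q)" by simp
        next
          fix y assume "y \<in> range q" then obtain k where "y = q k" by auto
          then show "y \<le> int n + 1" using oth qi by (cases "k = i") force+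
        next
          show "int n + 1 \<in> range q" using qi by (metis rangeI)
        qed
        moreover have "ssum q = ssum x" using qe sr ssum_upd[of r i] by simp
        ultimately have "q \<in> JS n (t - 1)" using qb xt
          unfolding JS_def KSplus_def Kplus_def by auto
        then show ?thesis using J by simp
      qed
    next
      assume qe: "q = r(i := r i - 1)"
      have sq: "ssum q = ssum x - 2" using qe sr ssum_upd[of r i] by simp
      show ?thesis
      proof (cases "q \<in> Dom n")
        case True then show ?thesis using low sq by simp
      next
        case False
        then have qb: "q \<in> bdry n" using qDB by simp
        have oth: "\<And>k. k \<noteq> i \<Longrightarrow> 1 \<le> q k \<and> q k \<le> int n" using rD qe unfolding Dom_def by auto
        have ri: "1 \<le> r i \<and> r i \<le> int n" using rD unfolding Dom_def by blast
        have qi1: "0 \<le> q i" "q i \<le> int n" using ri qe by auto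
        have qi: "q i = 0"
        proof (rule ccontr)
          assume "q i \<noteq> 0"
          then have "\<forall>k. 1 \<le> q k \<and> q k \<le> int n" using oth qi1
            by (metis le_less int_one_le_iff_zero_less zle_add1_eq_le)
          then have "q \<in> Dom n" unfolding Dom_def by simp
          then show False using False by simp
        qed
        have "Min (range q) = 0"
        proof (rule Min_eqI)
          show "finite (range q)" by simp
        next
          fix y assume "y \<in> range q" then obtain k where "y = q k" by auto
          then show "0 \<le> y" using oth qi by (cases "k = i") force+
        next
          show "0 \<in> range q" using qi by (metis rangeI)
        qed
        then have "q \<in> JS n (t - 1)" using qb xt sq
          unfolding JS_def KSminus_def Kminus_def by auto
        then show ?thesis using J by simp
      qed
    qed
  qed
  have "(\<Sum>q\<in>nbhd n r. \<gamma> r q * (u q - u r)) = 0" using eq rD sr xt xp r_def by simp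
  moreover have "(\<Sum>q\<in>nbhd n r. \<gamma> r q * (u q - u r)) = \<gamma> r x * (u x - u r) + (\<Sum>q\<in>nbhd n r - {x}. \<gamma> r q * (u q - u r))"
    by (rule sum.remove[OF fin xin])
  moreover have "(\<Sum>q\<in>nbhd n r - {x}. \<gamma> r q * (u q - u r)) = 0"
    using zero ur by (intro sum.neutral) auto
  moreover have "\<gamma> r x > 0" using cond xin unfolding conductivity_def nbhd_def by auto
  ultimately show ?thesis using ur by simp
qed


lemma bnd1:
  fixes u :: "('d::finite \<Rightarrow> int) \<Rightarrow> real" and x :: "'d \<Rightarrow> int"
  assumes n1: "n \<ge> 1" and cond: "conductivity n \<gamma>"
  and J: "\<And>b. b \<in> JS n (t - 1) \<Longrightarrow> u b = 0"
  and qbh: "\<And>b. b \<in> JS n (t - 1) \<Longrightarrow> \<gamma> b (qb n b) * (u (qb n b) - u b) = 0"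
  and xD: "x \<in> Dom n" and xt: "ssum x \<le> t" and xi: "x i = 1"
  shows "u x = 0"
proof -
  define b where "b = x(i := 0)"
  have bx: "b = x(i := x i + (-1))" unfolding b_def using xi by simp
  have l: "l1 x b = 1" using l1_upd[of x i "-1"] bx by simp
  have bD: "b \<notin> Dom n" unfolding b_def Dom_def by auto
  have bB: "b \<in> bdry n" using bdry_iff[OF n1] bD xD l by blast
  have xB: "x \<notin> bdry n" using bdry_iff[OF n1] xD by blast
  have eb: "edge n b x" unfolding edge_def using bB xD xB l l1_sym[of x b] by simp
  have uniq: "q = x" if q: "q \<in> Dom n \<and> edge n b q" for q
  proof -
    have "l1 b q = 1" using q unfolding edge_def by simp
    from l1_one[OF this] obtain k where k: "q = b(k := b k + 1) \<or> q = b(k := b k - 1)" by blast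
    have qi: "1 \<le> q i" using q unfolding Dom_def by blast
    show ?thesis
    proof (cases "k = i")
      case True
      then have "q = b(i := 1) \<or> q = b(i := -1)" using k by (simp add: b_def)
      moreover have "(b(i := -1)) i = -1" by simp
      ultimately have "q = b(i := 1)" using qi by fastforce
      also have "b(i := 1) = x" unfolding b_def using xi fun_upd_triv[of x i] by simp
      finally show ?thesis .
    next
      case False
      then have "q i = b i" using k by auto
      also have "b i = 0" unfolding b_def by simp
      finally show ?thesis using qi by simp
    qed
  qed
  have qbx: "qb n b = x" unfolding qb_def
    by (rule the_equality) (simp add: xD eb, rule uniq)
  have oth: "\<And>k. 1 \<le> x k" using xD unfolding Dom_def by blast
  have "Min (range b) = 0"
  proof (rule Min_eqI)
    show "finite (range b)" by simp
  next
    fix y assume "y \<in> range b" then obtain k where "y = b k" by auto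
    then show "0 \<le> y" using oth[of k] unfolding b_def by (cases "k = i") auto
  next
    show "0 \<in> range b" unfolding b_def by (metis fun_upd_same rangeI)
  qed
  moreover have "ssum b = ssum x - 1" unfolding b_def ssum_upd using xi by simp
  ultimately have bJ: "b \<in> JS n (t - 1)" using bB xt
    unfolding JS_def KSminus_def Kminus_def by auto
  have "\<gamma> b x * (u x - u b) = 0" using qbh[OF bJ] qbx by simp
  moreover have "\<gamma> b x > 0" using cond eb unfolding conductivity_def by auto
  ultimately show ?thesis using J[OF bJ] by simp
qed


theorem lemma3p4:
  fixes n :: nat and t :: int and \<gamma> :: "('d::finite \<Rightarrow> int) \<Rightarrow> ('d \<Rightarrow> int) \<Rightarrow> real"
    and p :: "'d \<Rightarrow> int" and u :: "('d \<Rightarrow> int) \<Rightarrow> real"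
  assumes "card (UNIV :: 'd set) \<ge> 2" and "n \<ge> 1"
    and "int (card (UNIV :: 'd set)) \<le> t" and "t \<le> int (card (UNIV :: 'd set)) * int n"
    and "conductivity n \<gamma>"
    and "p \<in> Lt n t"
    and "u p = 0"
    and "\<And>r. r \<in> LS n (t - 1) - (nbhd n p \<inter> (JS n (t - 1) \<union> LS n (t - 1))) \<Longrightarrow>
           (\<Sum>q\<in>nbhd n r. \<gamma> r q * (u q - u r)) = 0"
    and "\<And>b. b \<in> JS n (t - 1) \<Longrightarrow> u b = 0"
    and "\<And>b. b \<in> JS n (t - 1) \<Longrightarrow> \<gamma> b (qb n b) * (u (qb n b) - u b) = 0"
  shows "\<forall>x \<in> LS n t \<union> JS n (t - 1). u x = 0"
proof -
  note n1 = assms(2) and cond = assms(5) and J = assms(9) and qbh = assms(10)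
  have pD: "p \<in> Dom n" and sp: "ssum p = t" using assms(6) unfolding Lt_def by auto
  obtain j1 :: 'd where True by simp
  have "\<exists>j2. j2 \<noteq> j1"
  proof (rule ccontr)
    assume "\<not> (\<exists>j2. j2 \<noteq> j1)"
    then have "UNIV = {j1}" by auto
    then have "card (UNIV :: 'd set) = card {j1}" by (rule arg_cong)
    then show False using assms(1) by simp
  qed
  then obtain j2 where j12: "j2 \<noteq> j1" by blast
  have eq: "(\<Sum>q\<in>nbhd n r. \<gamma> r q * (u q - u r)) = 0"
    if "r \<in> Dom n" "ssum r \<le> t - 1" "r \<notin> nbhd n p" for r
    using assms(8)[of r] that unfolding LS_def by auto
  have bnd: "u x = 0" if "x \<in> Dom n" "ssum x \<le> t" "x i = 1" for x i
    using bnd1[OF n1 cond J qbh that] .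
  have nbp: "\<exists>i. r = p(i := p i - 1)" if "r \<in> nbhd n p" "ssum r = t - 1" for r
  proof -
    have "l1 p r = 1" using that(1) edge_Dom[OF n1 pD] unfolding nbhd_def by simp
    from l1_one[OF this] obtain i where "r = p(i := p i + 1) \<or> r = p(i := p i - 1)" by blast
    moreover have "r \<noteq> p(i := p i + 1)"
    proof
      assume "r = p(i := p i + 1)"
      then have "ssum r = t + 1" using ssum_upd[of p i] sp by simp
      then show False using that(2) by simp
    qed
    ultimately show ?thesis by blast
  qed
  have nbps: "ssum r = t - 1 \<or> ssum r = t + 1" if "r \<in> nbhd n p" for r
  proof -
    have "l1 p r = 1" using that(1) edge_Dom[OF n1 pD] unfolding nbhd_def by simp
    from l1_one[OF this] obtain i where "r = p(i := p i + 1) \<or> r = p(i := p i - 1)" by blast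
    then show ?thesis using ssum_upd[of p i] sp by auto
  qed
  have layer: "u x = 0"
    if low: "\<And>y. y \<in> Dom n \<Longrightarrow> ssum y < int k \<Longrightarrow> u y = 0" and kt: "int k \<le> t"
      and xD: "x \<in> Dom n" and xk: "ssum x = int k" for k :: nat and x
  proof -
    have phaseA: "\<forall>x\<in>Dom n. ssum x = int k \<longrightarrow> x j1 = int m \<longrightarrow> (int k < t \<or> x j1 \<le> p j1) \<longrightarrow> u x = 0"
      for m :: nat
    proof (induction m rule: less_induct)
      case (less m)
      show ?case
      proof (intro ballI impI)
        fix x assume xD: "x \<in> Dom n" and xk: "ssum x = int k" and xm: "x j1 = int m"
          and c: "int k < t \<or> x j1 \<le> p j1"
        show "u x = 0"
        proof (cases "x = p")
          case True then show ?thesis using assms(7) by simp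
        next
          case xp: False
          show ?thesis
          proof (cases "x j1 = 1")
            case True then show ?thesis using bnd xD xk kt by simp
          next
            case False
            have "1 \<le> x j1" using xD unfolding Dom_def by blast
            then have xj: "x j1 \<ge> 2" using False by linarith
            show ?thesis
            proof (rule step[OF n1 cond eq J xD _ xj])
              show "ssum x \<le> t" using xk kt by simp
            next
              fix y :: "'d \<Rightarrow> int" assume "y \<in> Dom n" "ssum y < ssum x" then show "u y = 0" using low xk by simp
            next
              show "x(j1 := x j1 - 1) \<notin> nbhd n p"
              proof
                assume rin: "x(j1 := x j1 - 1) \<in> nbhd n p"
                have sr: "ssum (x(j1 := x j1 - 1)) = int k - 1" using ssum_upd[of x j1] xk by simp
                show False
                proof (cases "int k < t")
                  case True then show False using nbps[OF rin] sr by simp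
                next
                  case False
                  then have kt': "int k = t" using kt by simp
                  then obtain i where ri: "x(j1 := x j1 - 1) = p(i := p i - 1)" using nbp[OF rin] sr by auto
                  have le: "x j1 \<le> p j1" using c False by simp
                  show False
                  proof (cases "i = j1")
                    case True
                    have "x = p"
                    proof
                      fix l show "x l = p l" using fun_cong[OF ri, of l] True by (cases "l = j1") auto
                    qed
                    then show False using xp by simp
                  next
                    case False
                    then have "x j1 - 1 = p j1" using fun_cong[OF ri, of j1] by simp
                    then show False using le by simp
                  qed
                qed
              qed
            next
              fix i assume ij: "i \<noteq> j1" and yD: "x(j1 := x j1 - 1, i := x i + 1) \<in> Dom n"
              let ?y = "x(j1 := x j1 - 1, i := x i + 1)"
              have sy: "ssum ?y = int k" using ssum_upd[of "x(j1 := x j1 - 1)" i] ssum_upd[of x j1] ij xk by simp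
              have yj: "?y j1 = x j1 - 1" using ij by simp
              have "?y j1 = int (m - 1)" "m - 1 < m" using yj xm xj by auto
              moreover have "int k < t \<or> ?y j1 \<le> p j1" using c yj by auto
              ultimately show "u ?y = 0" using less.IH[of "m - 1"] yD sy by blast
            qed
          qed
        qed
      qed
    qed
    have phaseB: "\<forall>x\<in>Dom n. ssum x = t \<longrightarrow> x j1 > p j1 \<longrightarrow>
        nat ((int n - x j1) * (int n + 1) + x j2) = m \<longrightarrow> u x = 0" if kT: "int k = t" for m :: nat
    proof (induction m rule: less_induct)
      case (less m)
      show ?case
      proof (intro ballI impI)
        fix x assume xD: "x \<in> Dom n" and xk: "ssum x = t" and c: "x j1 > p j1"
          and xm: "nat ((int n - x j1) * (int n + 1) + x j2) = m"
        show "u x = 0"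
        proof (cases "x j2 = 1")
          case True then show ?thesis using bnd xD xk by simp
        next
          case False
          have "1 \<le> x j2" using xD unfolding Dom_def by blast
            then have xj: "x j2 \<ge> 2" using False by linarith
          show ?thesis
          proof (rule step[OF n1 cond eq J xD _ xj])
            show "ssum x \<le> t" using xk by simp
          next
            fix y :: "'d \<Rightarrow> int" assume "y \<in> Dom n" "ssum y < ssum x" then show "u y = 0"
              using low xk kT by simp
          next
            show "x(j2 := x j2 - 1) \<notin> nbhd n p"
            proof
              assume rin: "x(j2 := x j2 - 1) \<in> nbhd n p"
              have sr: "ssum (x(j2 := x j2 - 1)) = t - 1" using ssum_upd[of x j2] xk by simp
              obtain i where ri: "x(j2 := x j2 - 1) = p(i := p i - 1)" using nbp[OF rin sr] by auto
              have "x j1 = (p(i := p i - 1)) j1" using fun_cong[OF ri, of j1] j12 by simp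
              then show False using c by (cases "i = j1") auto
            qed
          next
            fix i assume ij: "i \<noteq> j2" and yD: "x(j2 := x j2 - 1, i := x i + 1) \<in> Dom n"
            let ?y = "x(j2 := x j2 - 1, i := x i + 1)"
            have sy: "ssum ?y = t" using ssum_upd[of "x(j2 := x j2 - 1)" i] ssum_upd[of x j2] ij xk by simp
            have y1: "?y j1 \<le> int n" "?y j1 \<ge> 1" "x j1 \<le> int n" using yD xD unfolding Dom_def by auto
            have y2: "?y j2 = x j2 - 1" using ij by simp
            have yc: "?y j1 > p j1" using c ij j12 by (cases "i = j1") auto
            have "(int n - ?y j1) * (int n + 1) + ?y j2 < (int n - x j1) * (int n + 1) + x j2"
            proof (cases "i = j1")
              case True
              then have "?y j1 = x j1 + 1" using j12 by simp
              then show ?thesis using y2 by (simp add: algebra_simps)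
            next
              case False
              then have "?y j1 = x j1" using j12 by simp
              then show ?thesis using y2 by simp
            qed
            moreover have "0 \<le> (int n - ?y j1) * (int n + 1) + ?y j2" using y1 xj y2 by simp
            ultimately have "nat ((int n - ?y j1) * (int n + 1) + ?y j2) < m" using xm by linarith
            then show "u ?y = 0" using less.IH yD sy yc by blast
          qed
        qed
      qed
    qed
    show ?thesis
    proof (cases "int k < t \<or> x j1 \<le> p j1")
      case True
      have "x j1 = int (nat (x j1))" using xD unfolding Dom_def by (simp add: order_trans[OF zero_le_one])
      then show ?thesis using phaseA[of "nat (x j1)"] True xD xk by blast
    next
      case False
      then have kT: "int k = t" using kt by simp
      then show ?thesis using phaseB[OF kT] False xD xk by auto
    qed
  qed
  have all: "int k \<le> t + 1 \<Longrightarrow> \<forall>y\<in>Dom n. ssum y < int k \<longrightarrow> u y = 0" for k :: nat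
  proof (induction k)
    case 0 then show ?case using Dom_sum_nonneg by fastforce
  next
    case (Suc k)
    show ?case
    proof (intro ballI impI)
      fix y :: "'d \<Rightarrow> int" assume yD: "y \<in> Dom n" and yk: "ssum y < int (Suc k)"
      show "u y = 0"
      proof (cases "ssum y < int k")
        case True then show ?thesis using Suc yD by simp
      next
        case False
        then have "ssum y = int k" using yk by simp
        then show ?thesis using layer[of k y] Suc yD by simp
      qed
    qed
  qed
  have "t + 1 \<ge> 0" using assms(3) by simp
  then have fin: "\<forall>y\<in>Dom n. ssum y < t + 1 \<longrightarrow> u y = 0" using all[of "nat (t + 1)"] by simp
  show ?thesis
  proof
    fix x :: "'d \<Rightarrow> int" assume "x \<in> LS n t \<union> JS n (t - 1)"
    then show "u x = 0" using fin J unfolding LS_def by auto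
  qed
qed

end
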